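(* Let $n\ge1$, $\mathcal{X}$ the simplex in $\mathbb{R}^{n+1}$, $\theta$ a kernel, $\Phi$ a Lipschitz continuous smooth function on an open neighborhood of $\mathcal{X}$, and $\eta>0$. Let $x(t)$ be an interior solution of the inertial dynamics (ID) defined for all $t\ge0$, let $x^\omega$ be an $\omega$-limit point of $x(t)$ (i.e. $x(t_n)\to x^\omega$ for some $t_n\to\infty$), and let $U$ be a neighborhood of $x^\omega$ in $\mathcal{X}$. Then for every $T>0$ there exists an interval $J$ of length at least $T$ such that $x(t)\in U$ for all $t\in J$.
   Context: $\mathcal{X}=\{x\in\mathbb{R}^{n+1}:x_\alpha\ge0,\sum_\alpha x_\alpha=1\}$ with relative interior $\mathcal{X}^\circ$. A kernel is a $C^\infty$ function $\theta:[0,\infty)\to\mathbb{R}\cup\{+\infty\}$ with $\theta(x)<\infty$ for $x>0$, $\lim_{x\to0^+}\theta'(x)=-\infty$, $\theta''>0$, $\theta'''<0$ on $(0,\infty)$. With $\theta''_\alpha=\theta''(x_\alpha)$, $\theta'''_\alpha=\theta'''(x_\alpha)$, $\Theta''=(\sum_\beta1/\theta''_\beta)^{-1}$, $v_\alpha=\partial\Phi/\partial x_\alpha$, the inertial dynamics (ID) on $\mathcal{X}^\circ$ are $$\ddot x_\alpha=\frac{1}{\theta''_\alpha}\Big[v_\alpha-\sum_{\beta}\frac{\Theta''}{\theta''_\beta}v_\beta\Big]-\frac{1}{2\theta''_\alpha}\Big[\theta'''_\alpha\dot x_\alpha^2-\sum_\beta\frac{\Theta''}{\theta''_\beta}\theta'''_\beta\dot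 x_\beta^2\Big]-\eta\dot x_\alpha.$$ *)

theory Defs
  imports "HOL-Analysis.Analysis"
begin

text \<open>The psimplex in R^(n+1), indexed by a finite type 'n with CARD('n) = n+1.\<close>
definition psimplex :: "(real ^ 'n :: finite) set" where
  "psimplex = {x. (\<forall>a. x $ a \<ge> 0) \<and> (\<Sum>a\<in>UNIV. x $ a) = 1}"

definition psimplex_int :: "(real ^ 'n :: finite) set" where
  "psimplex_int = {x. (\<forall>a. x $ a > 0) \<and> (\<Sum>a\<in>UNIV. x $ a) = 1}"

definition Cinf_real_on :: "real set \<Rightarrow> (real \<Rightarrow> real) \<Rightarrow> bool" where
  "Cinf_real_on S f \<longleftrightarrow> (\<forall>k. \<forall>x\<in>S. ((deriv ^^ k) f has_real_derivative (deriv ^^ Suc k) f x) (at x))"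

text \<open>Kernel: smooth on (0,inf) (its value at 0, possibly +inf, plays no role),
  theta' tends to -inf at 0+, theta'' > 0, theta''' < 0.\<close>
definition kernel :: "(real \<Rightarrow> real) \<Rightarrow> bool" where
  "kernel \<theta> \<longleftrightarrow> Cinf_real_on {0<..} \<theta>
     \<and> filterlim (deriv \<theta>) at_bot (at_right 0)
     \<and> (\<forall>x>0. (deriv ^^ 2) \<theta> x > 0)
     \<and> (\<forall>x>0. (deriv ^^ 3) \<theta> x < 0)"

definition partial :: "'n :: finite \<Rightarrow> (real ^ 'n \<Rightarrow> real) \<Rightarrow> real ^ 'n \<Rightarrow> real" where
  "partial a f x = frechet_derivative f (at x) (axis a 1)"

fun Ck_on :: "nat \<Rightarrow> (real ^ 'n :: finite) set \<Rightarrow> (real ^ 'n \<Rightarrow> real) \<Rightarrow> bool" where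
  "Ck_on 0 S f = continuous_on S f"
| "Ck_on (Suc k) S f = ((\<forall>x\<in>S. f differentiable (at x)) \<and> (\<forall>a. Ck_on k S (partial a f)))"

definition smooth_on :: "(real ^ 'n :: finite) set \<Rightarrow> (real ^ 'n \<Rightarrow> real) \<Rightarrow> bool" where
  "smooth_on S f \<longleftrightarrow> (\<forall>k. Ck_on k S f)"

definition ID_rhs :: "(real \<Rightarrow> real) \<Rightarrow> (real ^ 'n :: finite \<Rightarrow> real) \<Rightarrow> real
     \<Rightarrow> real ^ 'n \<Rightarrow> real ^ 'n \<Rightarrow> real ^ 'n" where
  "ID_rhs \<theta> \<Phi> \<eta> x xd =
     (let th2 = (\<lambda>a. (deriv ^^ 2) \<theta> (x $ a));
          th3 = (\<lambda>a. (deriv ^^ 3) \<theta> (x $ a));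
          Th2 = inverse (\<Sum>b\<in>UNIV. 1 / th2 b);
          v = (\<lambda>a. partial a \<Phi> x)
      in \<chi> a. (1 / th2 a) * (v a - (\<Sum>b\<in>UNIV. Th2 / th2 b * v b))
             - (1 / (2 * th2 a)) * (th3 a * (xd $ a)^2 - (\<Sum>b\<in>UNIV. Th2 / th2 b * th3 b * (xd $ b)^2))
             - \<eta> * xd $ a)"

definition ID_interior_solution :: "(real \<Rightarrow> real) \<Rightarrow> (real ^ 'n :: finite \<Rightarrow> real) \<Rightarrow> real
     \<Rightarrow> (real \<Rightarrow> real ^ 'n) \<Rightarrow> bool" where
  "ID_interior_solution \<theta> \<Phi> \<eta> x \<longleftrightarrow>
     (\<exists>xd xdd. \<forall>t\<ge>0. x t \<in> psimplex_int
        \<and> (x has_vector_derivative xd t) (at t within {0..})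
        \<and> (xd has_vector_derivative xdd t) (at t within {0..})
        \<and> xdd t = ID_rhs \<theta> \<Phi> \<eta> (x t) (xd t))"

end

theory Submission
  imports Defs
begin

theorem lemma4p3:
  fixes \<theta> :: "real \<Rightarrow> real" and \<Phi> :: "real ^ 'n :: finite \<Rightarrow> real"
    and \<eta> :: real and x :: "real \<Rightarrow> real ^ 'n" and x\<omega> :: "real ^ 'n"
    and U :: "(real ^ 'n) set"
  assumes n: "CARD('n) \<ge> 2"
    and ker: "kernel \<theta>"
    and Phi: "\<exists>W. open W \<and> psimplex \<subseteq> W \<and> smooth_on W \<Phi> \<and> (\<exists>L. L-lipschitz_on W \<Phi>)"
    and eta: "\<eta> > 0"
    and sol: "ID_interior_solution \<theta> \<Phi> \<eta> x"
    and omega: "\<exists>s :: nat \<Rightarrow> real. filterlim s at_top sequentially \<and> (\<lambda>k. x (s k)) \<longlonglongrightarrow> x\<omega>"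
    and U: "U \<subseteq> psimplex" "\<exists>V. open V \<and> x\<omega> \<in> V \<and> V \<inter> psimplex \<subseteq> U"
  shows "\<forall>T>0. \<exists>a b. 0 \<le> a \<and> b - a \<ge> T \<and> (\<forall>t\<in>{a..b}. x t \<in> U)"
proof (intro allI impI)
  fix T :: real assume T: "T > 0"
  obtain xd xdd where S: "\<And>t. t \<ge> 0 \<Longrightarrow> x t \<in> psimplex_int
        \<and> (x has_vector_derivative xd t) (at t within {0..})
        \<and> (xd has_vector_derivative xdd t) (at t within {0..})
        \<and> xdd t = ID_rhs \<theta> \<Phi> \<eta> (x t) (xd t)"
    using sol unfolding ID_interior_solution_def by blast
  obtain W L where W: "open W" "psimplex \<subseteq> W" "smooth_on W \<Phi>" and L: "L-lipschitz_on W \<Phi>"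
    using Phi by blast
  define th2 where "th2 = (deriv ^^ 2) \<theta>"
  define th3 where "th3 = (deriv ^^ 3) \<theta>"
  have th2d: "\<And>y. y > 0 \<Longrightarrow> (th2 has_real_derivative th3 y) (at y)"
  proof -
    fix y :: real assume "y > 0"
    then have "((deriv ^^ 2) \<theta> has_real_derivative (deriv ^^ Suc 2) \<theta> y) (at y)"
      using ker unfolding kernel_def Cinf_real_on_def by blast
    then show "(th2 has_real_derivative th3 y) (at y)"
      unfolding th2_def th3_def by (simp add: numeral_3_eq_3 numeral_2_eq_2)
  qed
  have th2pos: "\<And>y. y > 0 \<Longrightarrow> th2 y > 0" using ker unfolding kernel_def th2_def by blast
  have th3neg: "\<And>y. y > 0 \<Longrightarrow> th3 y < 0" using ker unfolding kernel_def th3_def by blast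
  define c where "c = th2 1"
  have c: "c > 0" unfolding c_def by (rule th2pos) simp
  have th2ge: "th2 y \<ge> c" if "0 < y" "y \<le> 1" for y
    unfolding c_def
  proof (rule DERIV_nonpos_imp_nonincreasing[OF that(2)])
    fix z assume "y \<le> z" "z \<le> 1"
    then show "\<exists>d. DERIV th2 z :> d \<and> d \<le> 0"
      using that th2d th3neg by (meson less_eq_real_def less_le_trans)
  qed
  have xint: "\<And>t. t \<ge> 0 \<Longrightarrow> x t \<in> psimplex_int" using S by blast
  have int_nhd: "\<And>t::real. t > 0 \<Longrightarrow> at t within {0..} = at t"
    by (rule at_within_interior) simp
  have xder: "\<And>t. t > 0 \<Longrightarrow> (x has_vector_derivative xd t) (at t)"
    using S int_nhd by (metis less_eq_real_def)
  have xdder: "\<And>t. t > 0 \<Longrightarrow> (xd has_vector_derivative xdd t) (at t)"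
    using S int_nhd by (metis less_eq_real_def)
  have xpos: "\<And>t a. t \<ge> 0 \<Longrightarrow> 0 < x t $ a" using xint unfolding psimplex_int_def by blast
  have xsum: "\<And>t. t \<ge> 0 \<Longrightarrow> (\<Sum>a\<in>UNIV. x t $ a) = 1" using xint unfolding psimplex_int_def by blast
  have xle1: "x t $ a \<le> 1" if "t \<ge> 0" for t a
  proof -
    have "x t $ a \<le> (\<Sum>b\<in>UNIV. x t $ b)"
      by (rule member_le_sum) (use xpos that less_imp_le in auto)
    then show ?thesis using xsum that by simp
  qed
  have xsimp: "\<And>t. t \<ge> 0 \<Longrightarrow> x t \<in> psimplex"
    using xint unfolding psimplex_int_def psimplex_def by (auto intro: less_imp_le)
  have compder: "\<And>t a. t > 0 \<Longrightarrow> ((\<lambda>t. x t $ a) has_real_derivative xd t $ a) (at t)"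
    unfolding has_real_derivative_iff_has_vector_derivative
    by (rule bounded_linear.has_vector_derivative[OF bounded_linear_vec_nth xder])
  have compdder: "\<And>t a. t > 0 \<Longrightarrow> ((\<lambda>t. xd t $ a) has_real_derivative xdd t $ a) (at t)"
    unfolding has_real_derivative_iff_has_vector_derivative
    by (rule bounded_linear.has_vector_derivative[OF bounded_linear_vec_nth xdder])
  have sumxd: "(\<Sum>a\<in>UNIV. xd t $ a) = 0" if t: "t > 0" for t
  proof -
    have d1: "((\<lambda>t. \<Sum>a\<in>UNIV. x t $ a) has_real_derivative (\<Sum>a\<in>UNIV. xd t $ a)) (at t)"
      by (rule DERIV_sum) (use compder t in auto)
    have d2: "((\<lambda>t. \<Sum>a\<in>UNIV. x t $ a) has_real_derivative 0) (at t)"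
      by (rule has_field_derivative_transform_within_open[of "\<lambda>_. 1" 0 t "{0<..}"])
         (use t xsum in auto)
    show ?thesis using DERIV_unique[OF d1 d2] .
  qed

  have Phid: "((\<lambda>t. \<Phi> (x t)) has_real_derivative (\<Sum>a\<in>UNIV. xd t $ a * partial a \<Phi> (x t))) (at t)" if t: "t > 0" for t
  proof -
    have xW: "x t \<in> W" using xsimp W(2) t by auto
    have "Ck_on (Suc 0) W \<Phi>" using W(3) unfolding smooth_on_def by blast
    then have "\<Phi> differentiable (at (x t))" using xW by simp
    then have fd: "(\<Phi> has_derivative frechet_derivative \<Phi> (at (x t))) (at (x t))"
      using frechet_derivative_works by blast
    define D where "D = frechet_derivative \<Phi> (at (x t))"
    have lin: "linear D" using fd unfolding D_def by (rule has_derivative_linear)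
    have comp: "((\<lambda>t. \<Phi> (x t)) has_derivative (\<lambda>h. D (h *\<^sub>R xd t))) (at t)"
      using has_derivative_compose[OF xder[OF t, unfolded has_vector_derivative_def] fd[folded D_def]] .
    have eq: "(\<lambda>h. D (h *\<^sub>R xd t)) = (*) (D (xd t))"
      using linear_scale[OF lin] by (auto simp: fun_eq_iff mult.commute)
    have "D (xd t) = (\<Sum>a\<in>UNIV. xd t $ a * partial a \<Phi> (x t))"
    proof -
      have "D (xd t) = D (\<Sum>a\<in>UNIV. (xd t $ a) *\<^sub>R axis a 1)"
        using basis_expansion[of "xd t"] by (simp add: scalar_mult_eq_scaleR)
      also have "\<dots> = (\<Sum>a\<in>UNIV. xd t $ a * D (axis a 1))"
        by (simp add: linear_sum[OF lin] linear_scale[OF lin])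
      finally show ?thesis unfolding partial_def D_def by simp
    qed
    then show ?thesis using comp eq unfolding has_field_derivative_def by simp
  qed
  define v where "v t a = partial a \<Phi> (x t)" for t a
  define Q where "Q t = (\<Sum>a\<in>UNIV. th2 (x t $ a) * (xd t $ a)^2)" for t
  define E where "E t = Q t / 2 - \<Phi> (x t)" for t
  have Qnn: "Q t \<ge> 0" if "t \<ge> 0" for t
    unfolding Q_def using th2pos xpos that by (intro sum_nonneg) (simp add: less_imp_le)
  have Eder: "(E has_real_derivative - \<eta> * Q t) (at t)" if t: "t > 0" for t
  proof -
    define p where "p a = th2 (x t $ a)" for a
    define q where "q a = th3 (x t $ a)" for a
    define y where "y a = xd t $ a" for a
    define z where "z a = xdd t $ a" for a
    have termd: "((\<lambda>t. th2 (x t $ a) * (xd t $ a)^2) has_real_derivative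
         q a * y a * (y a)^2 + p a * (2 * y a * z a)) (at t)" for a
    proof -
      have h1: "((\<lambda>t. th2 (x t $ a)) has_real_derivative q a * y a) (at t)"
        using DERIV_chain'[OF compder[OF t] th2d[OF xpos]] t unfolding q_def y_def
        by (simp add: mult.commute)
      have h2: "((\<lambda>t. (xd t $ a)^2) has_real_derivative 2 * y a * z a) (at t)"
        using DERIV_power[OF compdder[OF t], where n=2] unfolding y_def z_def by (simp add: mult.commute mult.left_commute)
      show ?thesis using DERIV_mult'[OF h1 h2] unfolding p_def y_def by (simp add: algebra_simps)
    qed
    have d: "(E has_real_derivative (\<Sum>a\<in>UNIV. q a * y a * (y a)^2 + p a * (2 * y a * z a)) / 2
         - (\<Sum>a\<in>UNIV. y a * v t a)) (at t)"
      unfolding E_def[abs_def] Q_def v_def y_def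
      by (intro DERIV_diff DERIV_cdivide DERIV_sum termd[unfolded y_def] Phid[OF t])
    define Th where "Th = inverse (\<Sum>b\<in>UNIV. 1 / p b)"
    define S1 where "S1 = (\<Sum>b\<in>UNIV. Th / p b * v t b)"
    define S2 where "S2 = (\<Sum>b\<in>UNIV. Th / p b * q b * (y b)^2)"
    have zeq: "z a = (1 / p a) * (v t a - S1) - (1 / (2 * p a)) * (q a * (y a)^2 - S2) - \<eta> * y a" for a
      using S[of t] t unfolding z_def p_def q_def y_def S1_def S2_def Th_def v_def th2_def th3_def
      by (simp add: ID_rhs_def Let_def)
    have pa: "p a > 0" for a unfolding p_def using th2pos xpos t by simp
    have pt: "q a * y a * (y a)^2 + p a * (2 * y a * z a)
        = 2 * (y a * v t a) - (2 * S1) * y a + S2 * y a - 2 * \<eta> * (p a * (y a)^2)" for a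
    proof -
      have "p a \<noteq> 0" using pa[of a] by simp
      then show ?thesis unfolding zeq by (simp add: field_simps power2_eq_square)
    qed
    have sy: "(\<Sum>a\<in>UNIV. y a) = 0" using sumxd[OF t] unfolding y_def .
    have QQ: "Q t = (\<Sum>a\<in>UNIV. p a * (y a)^2)" unfolding Q_def p_def y_def ..
    have "(\<Sum>a\<in>UNIV. q a * y a * (y a)^2 + p a * (2 * y a * z a))
        = (\<Sum>a\<in>UNIV. 2 * (y a * v t a) - (2 * S1) * y a + S2 * y a - 2 * \<eta> * (p a * (y a)^2))"
      by (rule sum.cong[OF refl pt])
    also have "\<dots> = 2 * (\<Sum>a\<in>UNIV. y a * v t a) - (2 * S1) * (\<Sum>a\<in>UNIV. y a) + S2 * (\<Sum>a\<in>UNIV. y a)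
          - 2 * \<eta> * Q t"
      unfolding QQ by (simp add: sum.distrib sum_subtractf sum_distrib_left)
    finally have "(\<Sum>a\<in>UNIV. q a * y a * (y a)^2 + p a * (2 * y a * z a))
        = 2 * (\<Sum>a\<in>UNIV. y a * v t a) - (2 * S1) * (\<Sum>a\<in>UNIV. y a) + S2 * (\<Sum>a\<in>UNIV. y a)
          - 2 * \<eta> * Q t" .
    then have "(\<Sum>a\<in>UNIV. q a * y a * (y a)^2 + p a * (2 * y a * z a)) / 2
         - (\<Sum>a\<in>UNIV. y a * v t a) = - \<eta> * Q t"
      using sy by (simp add: field_simps)
    then show ?thesis using d by simp
  qed
  have Edec: "E t \<le> E s" if "0 < s" "s \<le> t" for s t
  proof (rule DERIV_nonpos_imp_nonincreasing[OF that(2)])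
    fix u assume "s \<le> u" "u \<le> t"
    then have u: "u > 0" using that by linarith
    show "\<exists>d. DERIV E u :> d \<and> d \<le> 0"
      using Eder[OF u] Qnn[of u] u eta by (intro exI[of _ "- \<eta> * Q u"]) simp
  qed
  have normS: "norm y \<le> 1" if "y \<in> psimplex" for y :: "real ^ 'n"
  proof -
    have "norm y \<le> (\<Sum>a\<in>UNIV. \<bar>y $ a\<bar>)" by (rule norm_le_l1_cart)
    also have "\<dots> = (\<Sum>a\<in>UNIV. y $ a)" using that unfolding psimplex_def by simp
    also have "\<dots> = 1" using that unfolding psimplex_def by simp
    finally show ?thesis .
  qed
  define B where "B = - \<Phi> (x 1) - 2 * \<bar>L\<bar>"
  have Ebnd: "E t \<ge> B" if t: "t > 0" for t
  proof -
    have x1: "x 1 \<in> W" "x 1 \<in> psimplex" using xsimp W(2) by auto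
    have xt: "x t \<in> W" "x t \<in> psimplex" using xsimp W(2) t by auto
    have "dist (\<Phi> (x t)) (\<Phi> (x 1)) \<le> L * dist (x t) (x 1)"
      by (rule lipschitz_onD[OF L xt(1) x1(1)])
    moreover have d2: "dist (x t) (x 1) \<le> 2"
      using norm_triangle_ineq4[of "x t" "x 1"] normS[OF xt(2)] normS[OF x1(2)]
      by (simp add: dist_norm)
    moreover have "L * dist (x t) (x 1) \<le> \<bar>L\<bar> * 2"
    proof -
      have "L * dist (x t) (x 1) \<le> \<bar>L\<bar> * dist (x t) (x 1)"
        by (rule mult_right_mono) auto
      also have "\<dots> \<le> \<bar>L\<bar> * 2" using d2 by (intro mult_left_mono) auto
      finally show ?thesis .
    qed
    ultimately have "\<Phi> (x t) \<le> \<Phi> (x 1) + 2 * \<bar>L\<bar>"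
      by (simp add: dist_real_def abs_le_iff)
    moreover have "Q t \<ge> 0" using Qnn t by simp
    ultimately show ?thesis unfolding E_def B_def by simp
  qed
  obtain V where V: "open V" "x\<omega> \<in> V" "V \<inter> psimplex \<subseteq> U" using U(2) by blast
  obtain r where r: "r > 0" "ball x\<omega> r \<subseteq> V" using V open_contains_ball by blast
  define \<epsilon> where "\<epsilon> = r / (2 * T)"
  have \<epsilon>: "\<epsilon> > 0" unfolding \<epsilon>_def using r T by simp
  define K where "K = 1 / (2 * \<epsilon> * c * \<eta>)"
  have K: "K > 0" unfolding K_def using \<epsilon> c eta by simp
  define \<delta> where "\<delta> = r / (4 * K)"
  have \<delta>: "\<delta> > 0" unfolding \<delta>_def using r K by simp
  define Einf where "Einf = Inf (E ` {0<..})"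
  have bdd: "bdd_below (E ` {0<..})" using Ebnd by (auto intro!: bdd_belowI2)
  have "Einf < Einf + \<delta>" using \<delta> by simp
  moreover have ne: "E ` {0<..} \<noteq> {}" by auto
  ultimately have "\<exists>e\<in>E ` {0<..}. e < Einf + \<delta>"
    unfolding Einf_def by (intro cInf_lessD) auto
  then obtain N where N: "N > 0" "E N < Einf + \<delta>" by auto
  have Egap: "E s - E t < \<delta>" if "N \<le> s" "s \<le> t" for s t
  proof -
    have "E t \<ge> Einf" unfolding Einf_def
      by (rule cInf_lower[OF _ bdd]) (use that N in auto)
    moreover have "E s \<le> E N" using Edec[of N s] that N by simp
    ultimately show ?thesis using N by simp
  qed
  obtain sq :: "nat \<Rightarrow> real" where sq: "filterlim sq at_top sequentially" "(\<lambda>k. x (sq k)) \<longlonglongrightarrow> x\<omega>"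
    using omega by blast
  have ev1: "\<forall>\<^sub>F k in sequentially. sq k \<ge> N" using sq(1) by (simp add: filterlim_at_top)
  have ev2: "\<forall>\<^sub>F k in sequentially. dist (x (sq k)) x\<omega> < r / 4"
    using sq(2) r unfolding tendsto_iff by (meson zero_less_divide_iff zero_less_numeral)
  obtain k where k: "sq k \<ge> N" "dist (x (sq k)) x\<omega> < r / 4"
    using eventually_happens'[OF _ eventually_conj[OF ev1 ev2]] by auto
  define a where "a = sq k"
  have a: "a > 0" "a \<ge> N" using k N unfolding a_def by auto
  have nsq: "(norm w)^2 = (\<Sum>i\<in>UNIV. (w $ i)^2)" for w :: "real ^ 'n"
    by (simp add: norm_vec_def L2_set_def sum_nonneg)
  show "\<exists>a b. 0 \<le> a \<and> b - a \<ge> T \<and> (\<forall>t\<in>{a..b}. x t \<in> U)"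
  proof (intro exI conjI ballI)
    show "0 \<le> a" using a by simp
    show "T \<le> a + T - a" by simp
    fix t assume t: "t \<in> {a..a+T}"
    have "norm (x t - x a) \<le> r / 2"
    proof (cases "t = a")
      case True then show ?thesis using r by simp
    next
      case False
      then have at: "a < t" using t by simp
      define \<phi> where "\<phi> u = \<epsilon> * u / 2 - K * E u" for u
      have cx: "continuous_on {a..t} x"
      proof (intro continuous_at_imp_continuous_on ballI)
        fix u assume "u \<in> {a..t}"
        then have "u > 0" using a by simp
        then show "isCont x u" using xder has_vector_derivative_continuous by blast
      qed
      have cE: "continuous_on {a..t} \<phi>" unfolding \<phi>_def
      proof (intro continuous_at_imp_continuous_on ballI)
        fix u assume "u \<in> {a..t}"
        then have "u > 0" using a by simp
        then have "isCont E u" using Eder DERIV_isCont by blast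
        then show "isCont (\<lambda>u. \<epsilon> * u / 2 - K * E u) u" by (intro continuous_intros) auto
      qed
      have "norm (x t - x a) \<le> \<phi> t - \<phi> a"
      proof (rule differentiable_bound_general[OF at cx cE])
        fix u assume u: "a < u" "u < t"
        then have u0: "u > 0" using a by simp
        show "(x has_vector_derivative xd u) (at u)" using xder[OF u0] .
        have "(\<phi> has_real_derivative \<epsilon> * 1 / 2 - K * (- \<eta> * Q u)) (at u)"
          unfolding \<phi>_def[abs_def]
          by (rule DERIV_diff[OF DERIV_cdivide[OF DERIV_cmult[OF DERIV_ident]] DERIV_cmult[OF Eder[OF u0]]])
        then show "(\<phi> has_vector_derivative (\<epsilon> / 2 + K * \<eta> * Q u)) (at u)"
          unfolding has_real_derivative_iff_has_vector_derivative[symmetric] by (simp add: mult.assoc)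
        have "Q u \<ge> c * (norm (xd u))^2"
        proof -
          have "c * (norm (xd u))^2 = (\<Sum>i\<in>UNIV. c * (xd u $ i)^2)"
            unfolding nsq by (simp add: sum_distrib_left)
          also have "\<dots> \<le> Q u" unfolding Q_def
            using th2ge xpos xle1 u0 by (intro sum_mono mult_right_mono) auto
          finally show ?thesis .
        qed
        then have "K * \<eta> * Q u \<ge> K * \<eta> * (c * (norm (xd u))^2)"
          using K eta by (intro mult_left_mono) auto
        moreover have "K * \<eta> * (c * (norm (xd u))^2) = (norm (xd u))^2 / (2 * \<epsilon>)"
          unfolding K_def using c eta \<epsilon> by (simp add: field_simps)
        moreover have "norm (xd u) \<le> \<epsilon> / 2 + (norm (xd u))^2 / (2 * \<epsilon>)"
        proof -
          have "0 \<le> (norm (xd u) - \<epsilon>)^2" by simp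
          then have "2 * \<epsilon> * norm (xd u) \<le> \<epsilon>^2 + (norm (xd u))^2"
            by (simp add: power2_diff algebra_simps)
          then show ?thesis using \<epsilon> by (simp add: field_simps power2_eq_square)
        qed
        ultimately show "norm (xd u) \<le> \<epsilon> / 2 + K * \<eta> * Q u" by simp
      qed
      also have "\<dots> = \<epsilon> * (t - a) / 2 + K * (E a - E t)" unfolding \<phi>_def by (simp add: field_simps)
      also have "\<dots> \<le> \<epsilon> * T / 2 + K * \<delta>"
      proof (rule add_mono)
        show "\<epsilon> * (t - a) / 2 \<le> \<epsilon> * T / 2" using t \<epsilon> by (simp add: mult_left_mono)
        show "K * (E a - E t) \<le> K * \<delta>"
          using Egap[of a t] a at K by (intro mult_left_mono) auto
      qed
      also have "\<dots> = r / 2" unfolding \<epsilon>_def \<delta>_def using T K by (simp add: field_simps)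
      finally show ?thesis .
    qed
    then have "dist x\<omega> (x t) < r"
    proof -
      assume h: "norm (x t - x a) \<le> r / 2"
      have "dist x\<omega> (x t) \<le> dist x\<omega> (x a) + dist (x a) (x t)" by (rule dist_triangle)
      also have "dist (x a) (x t) = norm (x t - x a)" by (simp add: dist_norm norm_minus_commute)
      finally show ?thesis using h k r unfolding a_def by (simp add: dist_commute)
    qed
    then have "x t \<in> V" using r by auto
    moreover have "x t \<in> psimplex" using xsimp a t by simp
    ultimately show "x t \<in> U" using V by auto
  qed
qed

end
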